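(* Let $\mu \in \mathcal{X}$ and let $P_X$ be a probability distribution on $\mathcal{X}$. (i) If $D(\mu ; P_X) = 0$ then $D_L(\mu ; P_X) = 0$. (ii) If $D(\mu ; P_X) = 2$ then $D_L(\mu ; P_X) = 1$.
   Context: $(\mathcal{X}, d)$ is a complete separable metric space with its Borel $\sigma$-algebra. Define $h: \mathcal{X}^3 \to \mathbb{R}$ by $h(x_1, x_2, x_3) := \mathbb{I}( x_3 \notin \{x_1, x_2\} ) \dfrac{ d^2(x_1, x_3) + d^2(x_2, x_3) - d^2(x_1, x_2) }{d(x_1, x_3)\, d(x_2, x_3) }$, where $h := 0$ when $x_3 \in \{x_1,x_2\}$. The metric spatial depth of $\mu \in \mathcal{X}$ with respect to a probability distribution $P_X$ on $\mathcal{X}$ is $D(\mu; P_X) := 1 - \frac{1}{2} \mathrm{E} \{ h(X_1, X_2, \mu) \}$, where $X_1, X_2 \sim P_X$ are independent. The metric lens depth is $D_L(\mu ; P_X) := P[ d(X_1, X_2) \geq \max \{ d( X_1, \mu), d( X_2, \mu) \} ]$ with $X_1, X_2 \sim P_X$ independent. *)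

theory Defs
  imports "HOL-Probability.Probability"
begin

definition hker :: "'a::metric_space \<Rightarrow> 'a \<Rightarrow> 'a \<Rightarrow> real" where
  "hker x1 x2 x3 = (if x3 \<notin> {x1, x2} then
      ((dist x1 x3)\<^sup>2 + (dist x2 x3)\<^sup>2 - (dist x1 x2)\<^sup>2) / (dist x1 x3 * dist x2 x3)
    else 0)"

definition spatial_depth :: "'a::metric_space \<Rightarrow> 'a measure \<Rightarrow> real" where
  "spatial_depth mu P = 1 - (1/2) * (\<integral>z. hker (fst z) (snd z) mu \<partial>(P \<Otimes>\<^sub>M P))"

definition lens_depth :: "'a::metric_space \<Rightarrow> 'a measure \<Rightarrow> real" where
  "lens_depth mu P = measure (P \<Otimes>\<^sub>M P)
     {z \<in> space (P \<Otimes>\<^sub>M P). dist (fst z) (snd z) \<ge> max (dist (fst z) mu) (dist (snd z) mu)}"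

end

theory Submission
  imports Defs
begin

lemma hker_bounds:
  fixes x y m :: "'a::metric_space"
  shows "hker x y m \<le> 2" "hker x y m \<ge> -2"
    "hker x y m = 2 \<Longrightarrow> \<not> (dist x y \<ge> max (dist x m) (dist y m))"
    "hker x y m = -2 \<Longrightarrow> dist x y \<ge> max (dist x m) (dist y m)"
proof -
  consider "m \<in> {x,y}" | "m \<notin> {x,y}" by blast
  then have all: "hker x y m \<le> 2 \<and> hker x y m \<ge> -2 \<and>
    (hker x y m = 2 \<longrightarrow> \<not> (dist x y \<ge> max (dist x m) (dist y m))) \<and>
    (hker x y m = -2 \<longrightarrow> dist x y \<ge> max (dist x m) (dist y m))"
  proof cases
    case 1 then show ?thesis by (simp add: hker_def)
  next
    case 2
    define a where "a = dist x m"
    define b where "b = dist y m"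
    define c where "c = dist x y"
    have a: "a > 0" "b > 0" using 2 by (auto simp: a_def b_def)
    have t1: "c \<le> a + b" unfolding a_def b_def c_def by (metis dist_commute dist_triangle)
    have t2: "a \<le> c + b" unfolding a_def b_def c_def by (metis dist_triangle)
    have t3: "b \<le> c + a" unfolding a_def b_def c_def by (metis dist_commute dist_triangle)
    have c0: "c \<ge> 0" by (simp add: c_def)
    have h: "hker x y m = (a^2 + b^2 - c^2) / (a*b)" using 2 by (simp add: hker_def a_def b_def c_def)
    have ab: "a*b > 0" using a by simp
    have u: "(a^2 + b^2 - c^2) \<le> 2*(a*b)"
    proof -
      have "(a-b)^2 \<le> c^2" using t2 t3 c0 by (simp add: abs_le_square_iff[symmetric] abs_le_iff) 
      then show ?thesis by (simp add: power2_eq_square algebra_simps)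
    qed
    have l: "(a^2 + b^2 - c^2) \<ge> -2*(a*b)"
    proof -
      have "c^2 \<le> (a+b)^2" using t1 c0 by (intro power_mono) auto
      then show ?thesis by (simp add: power2_eq_square algebra_simps)
    qed
    have e1: "hker x y m = 2 \<Longrightarrow> \<not> c \<ge> max a b"
    proof
      assume "hker x y m = 2" "c \<ge> max a b"
      then have "(a^2 + b^2 - c^2) / (a*b) = 2" using h by simp
      then have "a^2 + b^2 - c^2 = 2*(a*b)" using a by (auto simp add: divide_eq_eq)
      then have "c^2 = (a-b)^2" by (simp add: power2_eq_square algebra_simps)
      then have "c = \<bar>a-b\<bar>" using c0 by (metis abs_of_nonneg power2_abs power2_eq_iff_nonneg abs_ge_zero)
      then show False using \<open>c \<ge> max a b\<close> a by auto
    qed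
    have e2: "hker x y m = -2 \<Longrightarrow> c \<ge> max a b"
    proof -
      assume "hker x y m = -2"
      then have "(a^2 + b^2 - c^2) / (a*b) = -2" using h by simp
      then have "a^2 + b^2 - c^2 = -2*(a*b)" using a by (auto simp add: divide_eq_eq)
      then have "c^2 = (a+b)^2" by (simp add: power2_eq_square algebra_simps)
      then have "c = a+b" using c0 a by (simp add: power2_eq_iff_nonneg)
      then show ?thesis using a by auto
    qed
    have "hker x y m \<le> 2" using h ab u by (simp add: divide_le_eq)
    moreover have "hker x y m \<ge> -2" using h ab l by (simp add: le_divide_eq)
    ultimately show ?thesis using e1 e2 by (simp add: a_def b_def c_def)
  qed
  then show "hker x y m \<le> 2" "hker x y m \<ge> -2"
    "hker x y m = 2 \<Longrightarrow> \<not> (dist x y \<ge> max (dist x m) (dist y m))"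
    "hker x y m = -2 \<Longrightarrow> dist x y \<ge> max (dist x m) (dist y m)" by auto
qed

theorem corollary1:
  fixes mu :: "'a::polish_space" and P :: "'a measure"
  assumes "prob_space P" and "sets P = sets borel"
  shows "(spatial_depth mu P = 0 \<longrightarrow> lens_depth mu P = 0)
       \<and> (spatial_depth mu P = 2 \<longrightarrow> lens_depth mu P = 1)"
proof -
  let ?M = "P \<Otimes>\<^sub>M P"
  interpret PP: prob_space ?M
    by (intro prob_space_pair assms(1))
  have sM: "sets ?M = sets (borel :: ('a \<times> 'a) measure)"
    by (metis assms(2) borel_prod sets_pair_measure_cong)
  have f1[measurable]: "(\<lambda>z::'a\<times>'a. dist (fst z) mu) \<in> borel_measurable borel"
    by (intro borel_measurable_continuous_onI continuous_intros)
  have f2[measurable]: "(\<lambda>z::'a\<times>'a. dist (snd z) mu) \<in> borel_measurable borel"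
    by (intro borel_measurable_continuous_onI continuous_intros)
  have f3[measurable]: "(\<lambda>z::'a\<times>'a. dist (fst z) (snd z)) \<in> borel_measurable borel"
    by (intro borel_measurable_continuous_onI continuous_intros)
  have S[measurable]: "{z::'a\<times>'a \<in> space borel. mu \<notin> {fst z, snd z}} \<in> sets borel"
  proof -
    have "open {z::'a\<times>'a. mu \<noteq> fst z \<and> mu \<noteq> snd z}"
      by (intro open_Collect_conj open_Collect_neq continuous_intros)
    then show ?thesis by (simp add: borel_open)
  qed
  have meas_h: "(\<lambda>z. hker (fst z) (snd z) mu) \<in> borel_measurable ?M"
  proof -
    have "(\<lambda>z::'a\<times>'a. hker (fst z) (snd z) mu) \<in> borel_measurable borel"
      unfolding hker_def by measurable
    then show ?thesis using measurable_cong_sets[OF sM refl] by metis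
  qed
  have L: "{z \<in> space ?M. dist (fst z) (snd z) \<ge> max (dist (fst z) mu) (dist (snd z) mu)} \<in> sets ?M"
  proof -
    have "{z::'a\<times>'a \<in> space borel. dist (fst z) (snd z) \<ge> max (dist (fst z) mu) (dist (snd z) mu)} \<in> sets borel"
      by measurable
    then show ?thesis using sM sets_eq_imp_space_eq[OF sM] by simp
  qed
  have int: "integrable ?M (\<lambda>z. hker (fst z) (snd z) mu)"
    by (rule PP.integrable_const_bound[where B=2]) (use meas_h hker_bounds in \<open>auto simp: abs_le_iff intro!: AE_I2 simp del: neg_le_iff_le\<close>, smt (verit) hker_bounds(2))
  have part1: "spatial_depth mu P = 0 \<longrightarrow> lens_depth mu P = 0"
  proof
    assume "spatial_depth mu P = 0"
    then have I: "(\<integral>z. hker (fst z) (snd z) mu \<partial>?M) = 2" by (simp add: spatial_depth_def)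
    have int2: "integrable ?M (\<lambda>z. 2 - hker (fst z) (snd z) mu)" using int by simp
    have "(\<integral>z. 2 - hker (fst z) (snd z) mu \<partial>?M) = 0"
      using I int by (simp add: Bochner_Integration.integral_diff PP.prob_space)
    then have "AE z in ?M. 2 - hker (fst z) (snd z) mu = 0"
      using integral_nonneg_eq_0_iff_AE[OF int2 AE_I2[OF diff_ge_0_iff_ge[THEN iffD2, OF hker_bounds(1)]]] by simp
    then have "AE z in ?M. \<not> (dist (fst z) (snd z) \<ge> max (dist (fst z) mu) (dist (snd z) mu))"
      by eventually_elim (use hker_bounds(3) in auto)
    then show "lens_depth mu P = 0" unfolding lens_depth_def
      using PP.prob_Collect_eq_0[OF L] by simp
  qed
  have part2: "spatial_depth mu P = 2 \<longrightarrow> lens_depth mu P = 1"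
  proof
    assume "spatial_depth mu P = 2"
    then have I: "(\<integral>z. hker (fst z) (snd z) mu \<partial>?M) = -2" by (simp add: spatial_depth_def)
    have int2: "integrable ?M (\<lambda>z. hker (fst z) (snd z) mu + 2)" using int by simp
    have nn2: "\<And>z. 0 \<le> hker (fst z) (snd z) mu + 2" using hker_bounds(2) by (smt (verit))
    have "(\<integral>z. hker (fst z) (snd z) mu + 2 \<partial>?M) = 0"
      using I int by (simp add: Bochner_Integration.integral_add PP.prob_space)
    then have "AE z in ?M. hker (fst z) (snd z) mu + 2 = 0"
      using integral_nonneg_eq_0_iff_AE[OF int2 AE_I2[OF nn2]] by simp
    then have "AE z in ?M. (dist (fst z) (snd z) \<ge> max (dist (fst z) mu) (dist (snd z) mu))"
      by eventually_elim (use hker_bounds(4) in \<open>smt (verit)\<close>)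
    then show "lens_depth mu P = 1" unfolding lens_depth_def
      using PP.prob_Collect_eq_1[OF L] by simp
  qed
  show ?thesis using part1 part2 by blast
qed

end
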